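(* Assume the metric $d$ is such that $p\mapsto d(p,0)$ is $C^1$ on $\mathbb G\setminus\{0\}$. Define $$\Omega(p)=\left(\frac{p_1}{d(p,0)^2},\frac{p_2}{d(p,0)^3},\dots,\frac{p_s}{d(p,0)^{s+1}}\right),\qquad p=(p_1,\dots,p_s)\in\mathbb G\setminus\{0\},\ p_i\in\mathbb R^{\dim V_i}.$$ Then each scalar coordinate function of $\Omega$ is a $1$-dimensional CZ kernel which satisfies the annular boundedness condition.
   Context: $\mathbb G$ is a step-$s$ Carnot group with stratification $\mathfrak g=V_1\oplus\cdots\oplus V_s$, identified with $\mathbb R^N$ via exponential coordinates adapted to the stratification; identity $0$, $p^{-1}=-p$, dilations $\delta_t(p)=(tp_1,\dots,t^sp_s)$. $d$ is a fixed left-invariant homogeneous metric with $d((v,0,\dots,0),0)=|v|$; $\mathcal H^1$ the $1$-dimensional Hausdorff measure for $d$. A horizontal line is $\{(sv,0,\dots,0):s\in\mathbb R\}$, $v\in\mathbb R^{\dim V_1}\setminus\{0\}$. A $1$-dimensional CZ kernel is a continuous $K:\mathbb G\setminus\{0\}\to\mathbb R$ with $B>0$, $\beta\in(0,1]$ such that $|K(p)|\le B/d(p,0)$ and $|K(q^{-1}p_1)-K(q^{-1}p_2)|+|K(p_1^{-1}q)-K(p_2^{-1}q)|\le B\,d(p_1,p_2)^\beta/d(p_1,q)^{1+\beta}$ whenever $d(p_1,p_2)\le d(p_1,q)/2$. $\psi$ is $\mathbb G$-radial if $\psi(p)=f(d(p,0))$; $\psi^r=\psi\circ\delta_{1/r}$.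 $K$ satisfies annular boundedness if for every $\mathbb G$-radial $C^\infty$ $\psi$ with $\chi_{B(0,1/2)}\le\psi\le\chi_{B(0,2)}$ there is $A\ge1$ with $\left|\int_L[\psi^R-\psi^r]K\,d\mathcal H^1\right|\le A$ for all $0<r<R$ and all horizontal lines $L$. *)

theory Defs
  imports "HOL-Analysis.Analysis"
begin

text \<open>The group is real^'n; deg i in {1..s} is the layer of coordinate i.
  layer deg j is V_j (vectors supported on the coordinates of degree j).\<close>

definition layer :: "('n \<Rightarrow> nat) \<Rightarrow> nat \<Rightarrow> (real^'n) set" where
  "layer deg j = {x. \<forall>i. deg i \<noteq> j \<longrightarrow> x $ i = 0}"

definition dil :: "('n \<Rightarrow> nat) \<Rightarrow> real \<Rightarrow> real^'n \<Rightarrow> real^'n" where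
  "dil deg t p = (\<chi> i. t ^ (deg i) * p $ i)"

inductive poly_fun :: "('a::real_vector \<Rightarrow> real) \<Rightarrow> bool" where
  pf_const: "poly_fun (\<lambda>x. c)"
| pf_lin: "linear f \<Longrightarrow> poly_fun f"
| pf_add: "poly_fun f \<Longrightarrow> poly_fun g \<Longrightarrow> poly_fun (\<lambda>x. f x + g x)"
| pf_mult: "poly_fun f \<Longrightarrow> poly_fun g \<Longrightarrow> poly_fun (\<lambda>x. f x * g x)"

text \<open>Lie bracket read off from the group law in exponential coordinates
  (BCH: tX*tY = tX + tY + t^2/2 [X,Y] + O(t^3)).\<close>
definition lie_bracket :: "(real^'n \<Rightarrow> real^'n \<Rightarrow> real^'n) \<Rightarrow> real^'n \<Rightarrow> real^'n \<Rightarrow> real^'n" where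
  "lie_bracket gmul X Y =
     Lim (at (0::real)) (\<lambda>t. (2 / t^2) *\<^sub>R (gmul (t *\<^sub>R X) (t *\<^sub>R Y) - t *\<^sub>R X - t *\<^sub>R Y))"

text \<open>A step-s Carnot group structure on real^'n, in exponential coordinates
  adapted to the stratification V_1 + ... + V_s.\<close>
definition carnot_group :: "(real^'n \<Rightarrow> real^'n \<Rightarrow> real^'n) \<Rightarrow> ('n \<Rightarrow> nat) \<Rightarrow> nat \<Rightarrow> bool" where
  "carnot_group gmul deg s \<longleftrightarrow>
     1 \<le> s \<and> range deg = {1..s} \<and>
     (\<forall>p q r. gmul (gmul p q) r = gmul p (gmul q r)) \<and>
     (\<forall>p. gmul 0 p = p \<and> gmul p 0 = p \<and> gmul p (- p) = 0 \<and> gmul (- p) p = 0) \<and>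
     (\<forall>i. poly_fun (\<lambda>z :: (real^'n) \<times> (real^'n). gmul (fst z) (snd z) $ i)) \<and>
     (\<forall>X a b. gmul (a *\<^sub>R X) (b *\<^sub>R X) = (a + b) *\<^sub>R X) \<and>
     (\<forall>j. 1 \<le> j \<and> j < s \<longrightarrow>
        span {lie_bracket gmul X Y | X Y. X \<in> layer deg 1 \<and> Y \<in> layer deg j} = layer deg (Suc j)) \<and>
     (\<forall>X\<in>layer deg 1. \<forall>Y\<in>layer deg s. lie_bracket gmul X Y = 0)"

definition homogeneous_metric :: "(real^'n \<Rightarrow> real^'n \<Rightarrow> real^'n) \<Rightarrow> ('n \<Rightarrow> nat) \<Rightarrow> (real^'n \<Rightarrow> real^'n \<Rightarrow> real) \<Rightarrow> bool" where
  "homogeneous_metric gmul deg d \<longleftrightarrow>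
     Metric_space UNIV d \<and>
     (\<forall>p q r. d (gmul r p) (gmul r q) = d p q) \<and>
     (\<forall>t>0. \<forall>p q. d (dil deg t p) (dil deg t q) = t * d p q)"

definition diam_d :: "('a \<Rightarrow> 'a \<Rightarrow> real) \<Rightarrow> 'a set \<Rightarrow> ennreal" where
  "diam_d d C = (SUP x\<in>C. SUP y\<in>C. ennreal (d x y))"

definition hausdorff1_delta :: "('a \<Rightarrow> 'a \<Rightarrow> real) \<Rightarrow> real \<Rightarrow> 'a set \<Rightarrow> ennreal" where
  "hausdorff1_delta d \<delta> A =
     (INF C \<in> {C :: nat \<Rightarrow> 'a set. A \<subseteq> (\<Union>i. C i) \<and> (\<forall>i. diam_d d (C i) \<le> ennreal \<delta>)}.
        (\<Sum>i. diam_d d (C i)))"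

definition hausdorff1 :: "('a \<Rightarrow> 'a \<Rightarrow> real) \<Rightarrow> 'a set \<Rightarrow> ennreal" where
  "hausdorff1 d A = (SUP \<delta>\<in>{0<..}. hausdorff1_delta d \<delta> A)"

definition H1_measure :: "(real^'n \<Rightarrow> real^'n \<Rightarrow> real) \<Rightarrow> (real^'n) measure" where
  "H1_measure d = measure_of UNIV (sets borel) (hausdorff1 d)"

definition horizontal_lines :: "('n \<Rightarrow> nat) \<Rightarrow> (real^'n) set set" where
  "horizontal_lines deg = {L. \<exists>v\<in>layer deg 1. v \<noteq> 0 \<and> L = range (\<lambda>t::real. t *\<^sub>R v)}"

text \<open>1-dimensional CZ kernel; q^{-1} p is gmul (-q) p.\<close>
definition CZ_kernel :: "(real^'n \<Rightarrow> real^'n \<Rightarrow> real^'n) \<Rightarrow> (real^'n \<Rightarrow> real^'n \<Rightarrow> real) \<Rightarrow> (real^'n \<Rightarrow> real) \<Rightarrow> bool" where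
  "CZ_kernel gmul d K \<longleftrightarrow>
     continuous_on (- {0}) K \<and>
     (\<exists>B>0. \<exists>\<beta>. 0 < \<beta> \<and> \<beta> \<le> 1 \<and>
        (\<forall>p. p \<noteq> 0 \<longrightarrow> \<bar>K p\<bar> \<le> B / d p 0) \<and>
        (\<forall>p1 p2 q. d p1 p2 \<le> d p1 q / 2 \<longrightarrow>
            \<bar>K (gmul (- q) p1) - K (gmul (- q) p2)\<bar> + \<bar>K (gmul (- p1) q) - K (gmul (- p2) q)\<bar>
              \<le> B * d p1 p2 powr \<beta> / d p1 q powr (1 + \<beta>)))"

fun Ck :: "nat \<Rightarrow> ('a::euclidean_space \<Rightarrow> real) \<Rightarrow> bool" where
  "Ck 0 f = continuous_on UNIV f"
| "Ck (Suc k) f = ((\<forall>x. f differentiable (at x)) \<and>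
      (\<forall>b\<in>Basis. Ck k (\<lambda>x. frechet_derivative f (at x) b)))"

definition smooth_fun :: "('a::euclidean_space \<Rightarrow> real) \<Rightarrow> bool" where
  "smooth_fun f \<longleftrightarrow> (\<forall>k. Ck k f)"

definition radial :: "(real^'n \<Rightarrow> real^'n \<Rightarrow> real) \<Rightarrow> (real^'n \<Rightarrow> real) \<Rightarrow> bool" where
  "radial d \<psi> \<longleftrightarrow> (\<exists>f. \<forall>p. \<psi> p = f (d p 0))"

definition dball0 :: "(real^'n \<Rightarrow> real^'n \<Rightarrow> real) \<Rightarrow> real \<Rightarrow> (real^'n) set" where
  "dball0 d r = {p. d p 0 < r}"

text \<open>psi^r = psi o dil (1/r).\<close>
definition annular_bounded :: "('n \<Rightarrow> nat) \<Rightarrow> (real^'n \<Rightarrow> real^'n \<Rightarrow> real) \<Rightarrow> (real^'n \<Rightarrow> real) \<Rightarrow> bool" where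
  "annular_bounded deg d K \<longleftrightarrow>
     (\<forall>\<psi>. smooth_fun \<psi> \<and> radial d \<psi> \<and>
          (\<forall>p. indicator (dball0 d (1/2)) p \<le> \<psi> p \<and> \<psi> p \<le> indicator (dball0 d 2) p) \<longrightarrow>
        (\<exists>A\<ge>1. \<forall>r R. 0 < r \<and> r < R \<longrightarrow>
           (\<forall>L\<in>horizontal_lines deg.
              \<bar>LINT p:L|H1_measure d. (\<psi> (dil deg (1/R) p) - \<psi> (dil deg (1/r) p)) * K p\<bar> \<le> A)))"

definition Omega :: "('n \<Rightarrow> nat) \<Rightarrow> (real^'n \<Rightarrow> real^'n \<Rightarrow> real) \<Rightarrow> real^'n \<Rightarrow> real^'n" where
  "Omega deg d p = (\<chi> i. p $ i / d p 0 ^ (deg i + 1))"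

end

theory Submission
  imports Defs
begin


lemma poly_lip:
  fixes f :: "'a::euclidean_space \<Rightarrow> real"
  assumes "poly_fun f"
  shows "\<exists>M Lp. \<forall>a b. norm a \<le> R \<longrightarrow> norm b \<le> R \<longrightarrow> \<bar>f a\<bar> \<le> M \<and> \<bar>f a - f b\<bar> \<le> Lp * norm (a - b)"
  using assms
proof induction
  case (pf_const c)
  then show ?case by (intro exI[of _ "\<bar>c\<bar>"] exI[of _ 0]) auto
next
  case (pf_lin f)
  then have "bounded_linear f" using linear_conv_bounded_linear by blast
  then obtain K where K: "K > 0" "\<And>x. norm (f x) \<le> norm x * K"
    using bounded_linear.pos_bounded by blast
  have 1: "\<bar>f a\<bar> \<le> R * K" if a: "norm a \<le> R" for a
    using K(2)[of a] a K(1) by (smt (verit, best) mult_right_mono real_norm_def)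
  have 2: "\<bar>f a - f b\<bar> \<le> K * norm (a - b)" for a b
  proof -
    have "f a - f b = f (a - b)" using \<open>bounded_linear f\<close> by (simp add: linear_diff bounded_linear.linear)
    then show ?thesis using K(2)[of "a-b"] by (simp add: mult.commute)
  qed
  show ?case using 1 2 by blast
next
  case (pf_add f g)
  then obtain M1 L1 M2 L2 where
    h1: "\<forall>a b. norm a \<le> R \<longrightarrow> norm b \<le> R \<longrightarrow> \<bar>f a\<bar> \<le> M1 \<and> \<bar>f a - f b\<bar> \<le> L1 * norm (a - b)" and
    h2: "\<forall>a b. norm a \<le> R \<longrightarrow> norm b \<le> R \<longrightarrow> \<bar>g a\<bar> \<le> M2 \<and> \<bar>g a - g b\<bar> \<le> L2 * norm (a - b)"
    by blast
  have "\<bar>f a + g a\<bar> \<le> M1 + M2 \<and> \<bar>f a + g a - (f b + g b)\<bar> \<le> (L1 + L2) * norm (a - b)"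
    if "norm a \<le> R" "norm b \<le> R" for a b
    using h1[rule_format, OF that] h2[rule_format, OF that]
    by (smt (verit, best) distrib_right)
  then show ?case by blast
next
  case (pf_mult f g)
  then obtain M1 L1 M2 L2 where
    h1: "\<forall>a b. norm a \<le> R \<longrightarrow> norm b \<le> R \<longrightarrow> \<bar>f a\<bar> \<le> M1 \<and> \<bar>f a - f b\<bar> \<le> L1 * norm (a - b)" and
    h2: "\<forall>a b. norm a \<le> R \<longrightarrow> norm b \<le> R \<longrightarrow> \<bar>g a\<bar> \<le> M2 \<and> \<bar>g a - g b\<bar> \<le> L2 * norm (a - b)"
    by blast
  have "\<bar>f a * g a\<bar> \<le> M1 * M2 \<and> \<bar>f a * g a - f b * g b\<bar> \<le> (M1 * L2 + M2 * L1) * norm (a - b)"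
    if a: "norm a \<le> R" and b: "norm b \<le> R" for a b
  proof
    have m1: "0 \<le> M1" using h1 a by (meson abs_ge_zero order.trans)
    have m2: "0 \<le> M2" using h2 a by (meson abs_ge_zero order.trans)
    show "\<bar>f a * g a\<bar> \<le> M1 * M2" using h1 h2 a b
      unfolding abs_mult by (intro mult_mono) (auto intro: order.trans[OF abs_ge_zero])
    have e: "f a * g a - f b * g b = f a * (g a - g b) + g b * (f a - f b)" by (simp add: algebra_simps)
    have "\<bar>f a * (g a - g b)\<bar> \<le> M1 * (L2 * norm (a - b))"
      using h1 h2 a b m1 m2 unfolding abs_mult by (intro mult_mono) (auto intro: order.trans[OF abs_ge_zero])
    moreover have "\<bar>g b * (f a - f b)\<bar> \<le> M2 * (L1 * norm (a - b))"
      using h1 h2 a b m1 m2 unfolding abs_mult by (intro mult_mono) (auto intro: order.trans[OF abs_ge_zero])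
    ultimately show "\<bar>f a * g a - f b * g b\<bar> \<le> (M1 * L2 + M2 * L1) * norm (a - b)"
      unfolding e by (smt (verit, best) distrib_right mult.assoc)
  qed
  then show ?case by blast
qed

lemma pow_diff_bound:
  fixes a b R :: real
  assumes "0 \<le> a" "a \<le> R" "0 \<le> b" "b \<le> R" "1 \<le> R"
  shows "\<bar>a ^ m - b ^ m\<bar> \<le> real m * R ^ m * \<bar>a - b\<bar>"
proof (induction m)
  case 0 then show ?case by simp
next
  case (Suc m)
  have e: "a ^ Suc m - b ^ Suc m = a * (a^m - b^m) + b^m * (a - b)" by (simp add: algebra_simps)
  have "\<bar>a * (a^m - b^m)\<bar> \<le> R * (real m * R ^ m * \<bar>a - b\<bar>)"
    using Suc assms by (simp add: abs_mult mult_mono')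
  moreover have "\<bar>b^m * (a - b)\<bar> \<le> R^m * \<bar>a - b\<bar>"
    using assms by (simp add: abs_mult mult_right_mono power_mono)
  moreover have "R^m * \<bar>a - b\<bar> \<le> R^Suc m * \<bar>a - b\<bar>" using assms
    by (intro mult_right_mono) (simp_all add: power_increasing)
  moreover have "\<bar>a * (a^m - b^m) + b^m * (a - b)\<bar> \<le> \<bar>a * (a^m - b^m)\<bar> + \<bar>b^m * (a - b)\<bar>"
    by (rule abs_triangle_ineq)
  moreover have "R * (real m * R ^ m * \<bar>a - b\<bar>) = real m * R^Suc m * \<bar>a - b\<bar>" by simp
  moreover have "real (Suc m) * R ^ Suc m * \<bar>a-b\<bar> = real m * R^Suc m * \<bar>a-b\<bar> + R^Suc m * \<bar>a-b\<bar>"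
    by (simp add: algebra_simps)
  ultimately show ?case unfolding e by linarith
qed



context
  fixes gmul :: "real^'n \<Rightarrow> real^'n \<Rightarrow> real^'n"
    and deg :: "'n \<Rightarrow> nat" and s :: nat
    and d :: "real^'n \<Rightarrow> real^'n \<Rightarrow> real"
  assumes cg: "carnot_group gmul deg s"
    and hm: "homogeneous_metric gmul deg d"
    and dc: "\<And>p. p \<noteq> 0 \<Longrightarrow> isCont (\<lambda>q. d q 0) p"
begin

lemma met: "Metric_space UNIV d" using hm unfolding homogeneous_metric_def by blast
lemma d_nn: "0 \<le> d x y" using Metric_space.nonneg[OF met] .
lemma d_comm: "d x y = d y x" using Metric_space.commute[OF met] .
lemma d_zero: "d x y = 0 \<longleftrightarrow> x = y" using Metric_space.zero[OF met] by simp
lemma d_tri: "d x z \<le> d x y + d y z" using Metric_space.triangle[OF met] by simp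
lemma d_pos: "p \<noteq> 0 \<Longrightarrow> 0 < d p 0" using d_nn d_zero by (metis less_eq_real_def)
lemma linv: "d (gmul r p) (gmul r q) = d p q" using hm unfolding homogeneous_metric_def by blast
lemma dhom: "t > 0 \<Longrightarrow> d (dil deg t p) (dil deg t q) = t * d p q"
  using hm unfolding homogeneous_metric_def by blast
lemma assoc: "gmul (gmul p q) r = gmul p (gmul q r)" using cg unfolding carnot_group_def by blast
lemma unit: "gmul 0 p = p" "gmul p 0 = p" using cg unfolding carnot_group_def by blast+
lemma inv: "gmul p (- p) = 0" "gmul (- p) p = 0" using cg unfolding carnot_group_def by blast+
lemma poly: "poly_fun (\<lambda>z :: (real^'n) \<times> (real^'n). gmul (fst z) (snd z) $ i)"
  using cg unfolding carnot_group_def by blast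
lemma oneparam: "gmul (a *\<^sub>R X) (b *\<^sub>R X) = (a + b) *\<^sub>R X"
  using cg unfolding carnot_group_def by blast
lemma deg_ge1: "1 \<le> deg i"
proof -
  have "deg i \<in> range deg" by simp
  then show ?thesis using cg unfolding carnot_group_def by auto
qed

lemma dil_dil: "dil deg a (dil deg b p) = dil deg (a * b) p"
  by (simp add: dil_def vec_eq_iff power_mult_distrib)
lemma dil_one: "dil deg 1 p = p" by (simp add: dil_def vec_eq_iff)
lemma dil_zero: "dil deg t 0 = 0" by (simp add: dil_def vec_eq_iff)
lemma dil_neg: "dil deg t (- p) = - dil deg t p" by (simp add: dil_def vec_eq_iff)
lemma dil_nth: "dil deg t p $ i = t ^ deg i * p $ i" by (simp add: dil_def)
lemma d_dil0: "t > 0 \<Longrightarrow> d (dil deg t p) 0 = t * d p 0"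
  using dhom[of t p 0] by (simp add: dil_zero)

lemma d_neg0: "d (- p) 0 = d p 0"
proof -
  have "d (gmul p (- p)) (gmul p 0) = d (- p) 0" by (rule linv)
  then show ?thesis by (simp add: inv unit d_comm)
qed

lemma inv_unique: "gmul w w' = 0 \<Longrightarrow> w' = - w"
proof -
  assume h: "gmul w w' = 0"
  have "w' = gmul (gmul (- w) w) w'" by (simp add: inv unit)
  also have "\<dots> = gmul (- w) (gmul w w')" by (rule assoc)
  finally show ?thesis by (simp add: h unit)
qed

lemma inv_swap: "gmul (- p) q = - gmul (- q) p"
proof -
  have "gmul (gmul (- q) p) (gmul (- p) q) = gmul (- q) (gmul (gmul p (- p)) q)"
    by (simp add: assoc)
  also have "\<dots> = 0" by (simp add: inv unit)
  finally show ?thesis by (rule inv_unique)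
qed

lemma dcont_on: "S \<subseteq> - {0} \<Longrightarrow> continuous_on S (\<lambda>q. d q 0)"
proof (intro continuous_at_imp_continuous_on ballI)
  fix x assume "S \<subseteq> - {0}" "x \<in> S"
  then have "x \<noteq> 0" by auto
  then show "isCont (\<lambda>q. d q 0) x" by (rule dc)
qed

lemma norm_bound: "\<exists>c>0. \<forall>p i. \<bar>p $ i\<bar> \<le> (d p 0 / c) ^ deg i"
proof -
  define S where "S = {u::real^'n. \<forall>i. \<bar>u$i\<bar> \<le> 1} \<inter> (\<Union>i. {u. \<bar>u$i\<bar> = 1})"
  have cl1: "closed {u::real^'n. \<forall>i. \<bar>u$i\<bar> \<le> 1}"
  proof -
    have "{u::real^'n. \<forall>i. \<bar>u$i\<bar> \<le> 1} = (\<Inter>i. {u. \<bar>u$i\<bar> \<le> 1})" by auto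
    moreover have "closed {u::real^'n. \<bar>u$i\<bar> \<le> 1}" for i
      by (intro closed_Collect_le continuous_intros)
    ultimately show ?thesis by (simp add: closed_INT)
  qed
  have cl2: "closed (\<Union>i. {u::real^'n. \<bar>u$i\<bar> = 1})"
    by (intro closed_Union) (auto intro!: closed_Collect_eq continuous_intros)
  have bd: "bounded S"
  proof -
    have "norm u \<le> real CARD('n)" if "u \<in> S" for u
    proof -
      have "norm u \<le> (\<Sum>i\<in>UNIV. \<bar>u$i\<bar>)" by (rule norm_le_l1_cart)
      also have "\<dots> \<le> (\<Sum>i\<in>(UNIV::'n set). 1)" using that unfolding S_def by (intro sum_mono) auto
      finally show ?thesis by simp
    qed
    then show ?thesis unfolding bounded_iff by blast
  qed
  have cpt: "compact S" using bd cl1 cl2 unfolding S_def by (simp add: compact_eq_bounded_closed closed_Int)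
  have ne: "S \<noteq> {}"
  proof -
    have "((\<chi> i. 1) :: real^'n) \<in> S" unfolding S_def by auto
    then show ?thesis by blast
  qed
  have S0: "S \<subseteq> - {0}" unfolding S_def by auto
  obtain u0 where u0: "u0 \<in> S" "\<And>y. y \<in> S \<Longrightarrow> d u0 0 \<le> d y 0"
    using continuous_attains_inf[OF cpt ne dcont_on[OF S0]] by blast
  define c where "c = d u0 0"
  have cpos: "c > 0" unfolding c_def using u0(1) S0 d_pos by (metis ComplD insertI1 subsetD)
  have "\<bar>p $ i\<bar> \<le> (d p 0 / c) ^ deg i" for p i
  proof (cases "p = 0")
    case True then show ?thesis using d_nn[of 0 0] cpos by simp
  next
    case False
    define t where "t = Max (range (\<lambda>j. root (deg j) \<bar>p$j\<bar>))"
    have fin: "finite (range (\<lambda>j. root (deg j) \<bar>p$j\<bar>))" by simp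
    obtain j0 where j0: "p $ j0 \<noteq> 0" using False by (auto simp: vec_eq_iff)
    have dg: "0 < deg j" for j using deg_ge1[of j] by simp
    have tge: "root (deg j) \<bar>p$j\<bar> \<le> t" for j unfolding t_def by (rule Max_ge[OF fin]) auto
    have "0 < root (deg j0) \<bar>p$j0\<bar>" using j0 dg by simp
    then have tpos: "t > 0" using tge[of j0] by linarith
    obtain i0 where i0: "t = root (deg i0) \<bar>p$i0\<bar>"
    proof -
      have "t \<in> range (\<lambda>j. root (deg j) \<bar>p$j\<bar>)" unfolding t_def by (rule Max_in[OF fin]) auto
      then show ?thesis using that by blast
    qed
    have pj: "\<bar>p$j\<bar> \<le> t ^ deg j" for j
    proof -
      have "\<bar>p$j\<bar> = root (deg j) \<bar>p$j\<bar> ^ deg j" using dg[of j] by (simp add: real_root_pow_pos2)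
      also have "\<dots> \<le> t ^ deg j" using tge[of j] dg[of j] by (intro power_mono) auto
      finally show ?thesis .
    qed
    define u where "u = dil deg (1/t) p"
    have uj: "\<bar>u$j\<bar> \<le> 1" for j
    proof -
      have "\<bar>u$j\<bar> = \<bar>p$j\<bar> / t ^ deg j" unfolding u_def dil_nth using tpos
        by (simp add: abs_mult power_divide)
      also have "\<dots> \<le> 1" using pj[of j] tpos by simp
      finally show ?thesis .
    qed
    have ui0: "\<bar>u$i0\<bar> = 1"
    proof -
      have "\<bar>u$i0\<bar> = \<bar>p$i0\<bar> / t ^ deg i0" unfolding u_def dil_nth using tpos
        by (simp add: abs_mult power_divide)
      also have "t ^ deg i0 = \<bar>p$i0\<bar>" unfolding i0 using dg[of i0] by (simp add: real_root_pow_pos2)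
      finally show ?thesis using i0 tpos by (cases "p$i0 = 0") auto
    qed
    have "u \<in> S" unfolding S_def using uj ui0 by auto
    then have "c \<le> d u 0" using u0 c_def by simp
    have "dil deg t u = p" unfolding u_def dil_dil using tpos by (simp add: dil_one)
    then have "d p 0 = t * d u 0" using d_dil0[OF tpos, of u] by simp
    then have "t * c \<le> d p 0" using \<open>c \<le> d u 0\<close> tpos by simp
    then have "t \<le> d p 0 / c" using cpos by (simp add: field_simps)
    then have "t ^ deg i \<le> (d p 0 / c) ^ deg i" using tpos by (intro power_mono) auto
    then show ?thesis using pj[of i] by linarith
  qed
  then show ?thesis using cpos by blast
qed


lemma Om: "Omega deg d p $ i = p$i / d p 0 ^ (deg i + 1)" by (simp add: Omega_def)

lemma K_dil: "t > 0 \<Longrightarrow> Omega deg d (dil deg t p) $ i = Omega deg d p $ i / t"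
proof -
  assume t: "t > 0"
  show ?thesis
  proof (cases "d p 0 = 0")
    case True then show ?thesis by (simp add: Om d_dil0[OF t])
  next
    case False
    then show ?thesis using t
      by (simp add: Om d_dil0[OF t] dil_nth power_mult_distrib field_simps)
  qed
qed

lemma K_neg: "Omega deg d (- p) $ i = - Omega deg d p $ i" by (simp add: Om d_neg0)

lemma norm_le_pair: "norm (a, b) \<le> norm a + norm (b::real^'n)" for a :: "real^'n"
  by (rule norm_Pair_le)

lemma K_bound: "\<exists>B1>0. \<forall>p. p \<noteq> 0 \<longrightarrow> \<bar>Omega deg d p $ i\<bar> \<le> B1 / d p 0"
proof -
  obtain c where c: "c > 0" "\<And>p i. \<bar>p $ i\<bar> \<le> (d p 0 / c) ^ deg i" using norm_bound by blast
  have "\<bar>Omega deg d p $ i\<bar> \<le> (1/c) ^ deg i / d p 0" if "p \<noteq> 0" for p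
  proof -
    have dp: "d p 0 > 0" using d_pos that by blast
    have "\<bar>Omega deg d p $ i\<bar> = \<bar>p$i\<bar> / d p 0 ^ (deg i + 1)" using dp by (simp add: Om abs_div)
    also have "\<dots> \<le> (d p 0 / c) ^ deg i / d p 0 ^ (deg i + 1)"
      using c(2) dp by (intro divide_right_mono) auto
    also have "\<dots> = (1/c) ^ deg i / d p 0" using dp c(1) by (simp add: power_divide field_simps)
    finally show ?thesis .
  qed
  moreover have "(1/c) ^ deg i > 0" using c by simp
  ultimately show ?thesis by blast
qed

lemma small_norm: "\<exists>c>0. \<forall>z. d z 0 \<le> 1 \<longrightarrow> norm z \<le> (\<Sum>j\<in>UNIV. (1/c) ^ deg j) * d z 0"
proof -
  obtain c where c: "c > 0" "\<And>p i. \<bar>p $ i\<bar> \<le> (d p 0 / c) ^ deg i" using norm_bound by blast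
  have "norm z \<le> (\<Sum>j\<in>UNIV. (1/c) ^ deg j) * d z 0" if z: "d z 0 \<le> 1" for z
  proof -
    have "\<bar>z$j\<bar> \<le> (1/c) ^ deg j * d z 0" for j
    proof -
      have "d z 0 ^ deg j \<le> d z 0 ^ 1" using z d_nn deg_ge1[of j] by (intro power_decreasing) auto
      then have "(1/c) ^ deg j * d z 0 ^ deg j \<le> (1/c) ^ deg j * d z 0"
        using c(1) by (intro mult_left_mono) auto
      moreover have "(d z 0 / c) ^ deg j = (1/c) ^ deg j * d z 0 ^ deg j" by (simp add: power_divide)
      ultimately show ?thesis using c(2)[of z j] by linarith
    qed
    then have "(\<Sum>j\<in>UNIV. \<bar>z$j\<bar>) \<le> (\<Sum>j\<in>UNIV. (1/c) ^ deg j * d z 0)" by (intro sum_mono) auto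
    then show ?thesis using norm_le_l1_cart[of z] by (simp add: sum_distrib_right)
  qed
  then show ?thesis using c(1) by blast
qed

lemma holder1: "\<exists>H. \<forall>x0 y0. d x0 0 = 1 \<longrightarrow> d x0 y0 \<le> 1/2 \<longrightarrow>
   \<bar>Omega deg d x0 $ i - Omega deg d y0 $ i\<bar> \<le> H * d x0 y0"
proof -
  obtain c where c: "c > 0" "\<And>p i. \<bar>p $ i\<bar> \<le> (d p 0 / c) ^ deg i" using norm_bound by blast
  obtain c' where c': "\<And>z. d z 0 \<le> 1 \<Longrightarrow> norm z \<le> (\<Sum>j\<in>UNIV. (1/c') ^ deg j) * d z 0"
    using small_norm by blast
  define Cn where "Cn = (\<Sum>j\<in>UNIV. (1/c') ^ deg j)"
  define R where "R = 2 * Cn"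
  obtain Mx Lp where lp: "\<And>a b. norm a \<le> R \<Longrightarrow> norm b \<le> R \<Longrightarrow>
      \<bar>gmul (fst a) (snd a) $ i - gmul (fst b) (snd b) $ i\<bar> \<le> Lp * norm (a - b)"
    using poly_lip[OF poly[of i], of R] by blast
  define k where "k = deg i"
  define m where "m = k + 1"
  define H where "H = \<bar>Lp\<bar> * Cn + (3/(2*c))^k * 2^m * (real m * 2^m)"
  have "\<bar>Omega deg d x0 $ i - Omega deg d y0 $ i\<bar> \<le> H * d x0 y0"
    if x0: "d x0 0 = 1" and xy: "d x0 y0 \<le> 1/2" for x0 y0
  proof -
    define \<delta> where "\<delta> = d x0 y0"
    have \<delta>0: "0 \<le> \<delta>" unfolding \<delta>_def by (rule d_nn)
    define z where "z = gmul (- x0) y0"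
    have dz: "d z 0 = \<delta>"
    proof -
      have "d (gmul (- x0) y0) (gmul (- x0) x0) = d y0 x0" by (rule linv)
      then show ?thesis unfolding z_def \<delta>_def by (simp add: inv d_comm)
    qed
    have yz: "gmul x0 z = y0" unfolding z_def by (simp add: assoc[symmetric] inv unit)
    have nz: "norm z \<le> Cn * \<delta>" using c'[of z] dz xy \<delta>_def unfolding Cn_def by simp
    have nx: "norm x0 \<le> Cn" using c'[of x0] x0 unfolding Cn_def by simp
    have Cn0: "0 \<le> Cn" using nx norm_ge_zero order.trans by blast
    have "Cn * \<delta> \<le> Cn * 1" using xy \<delta>_def Cn0 by (intro mult_left_mono) auto
    then have r1: "norm (x0, z) \<le> R" using norm_le_pair[of x0 z] nz nx unfolding R_def by linarith
    have r2: "norm (x0, 0::real^'n) \<le> R" using nx Cn0 unfolding R_def by (simp add: norm_Pair)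
    have "\<bar>y0$i - x0$i\<bar> \<le> Lp * norm ((x0, z) - (x0, 0))"
      using lp[OF r1 r2] by (simp add: yz unit)
    also have "\<dots> = Lp * norm z" by (simp add: norm_Pair)
    also have "\<dots> \<le> \<bar>Lp\<bar> * norm z" by (simp add: mult_right_mono)
    also have "\<dots> \<le> \<bar>Lp\<bar> * (Cn * \<delta>)" using nz by (simp add: mult_left_mono)
    finally have e1: "\<bar>x0$i - y0$i\<bar> \<le> \<bar>Lp\<bar> * Cn * \<delta>" by (simp add: abs_minus_commute)
    define a where "a = d y0 0"
    have t1: "d x0 0 \<le> d x0 y0 + d y0 0" by (rule d_tri)
    have t2: "d y0 0 \<le> d y0 x0 + d x0 0" by (rule d_tri)
    have a1: "\<bar>a - 1\<bar> \<le> \<delta>" using t1 t2 x0 unfolding a_def \<delta>_def by (simp add: d_comm)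
    have alo: "1/2 \<le> a" and ahi: "a \<le> 3/2" using a1 xy \<delta>_def by auto
    have yb: "\<bar>y0$i\<bar> \<le> (3/(2*c))^k"
    proof -
      have "\<bar>y0$i\<bar> \<le> (a/c)^k" using c(2)[of y0 i] unfolding a_def k_def .
      also have "\<dots> \<le> (3/(2*c))^k" using alo ahi c(1) by (intro power_mono) (auto simp: field_simps)
      finally show ?thesis .
    qed
    have Kx: "Omega deg d x0 $ i = x0$i" using x0 by (simp add: Om)
    have Ky: "Omega deg d y0 $ i = y0$i / a^m" unfolding a_def m_def k_def by (simp add: Om)
    have apos: "a > 0" using alo by simp
    have am: "a^m \<ge> (1/2)^m" using alo by (intro power_mono) auto
    have split: "x0$i - y0$i / a^m = (x0$i - y0$i) + y0$i * ((a^m - 1) / a^m)"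
      using apos by (simp add: field_simps)
    have q1: "\<bar>(a^m - 1) / a^m\<bar> \<le> 2^m * \<bar>a^m - 1\<bar>"
    proof -
      have "\<bar>(a^m - 1) / a^m\<bar> = \<bar>a^m - 1\<bar> / a^m" using apos by (simp add: abs_div)
      also have "\<dots> \<le> \<bar>a^m - 1\<bar> / (1/2)^m" using am apos
        by (intro divide_left_mono) auto
      also have "\<dots> = 2^m * \<bar>a^m - 1\<bar>" by (simp add: power_divide)
      finally show ?thesis .
    qed
    have q2: "\<bar>a^m - 1\<bar> \<le> real m * 2^m * \<delta>"
    proof -
      have "\<bar>a^m - 1^m\<bar> \<le> real m * 2^m * \<bar>a - 1\<bar>"
        using apos ahi by (intro pow_diff_bound) auto
      also have "\<dots> \<le> real m * 2^m * \<delta>" using a1 by (intro mult_left_mono) auto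
      finally show ?thesis by simp
    qed
    have e2: "\<bar>y0$i * ((a^m - 1) / a^m)\<bar> \<le> (3/(2*c))^k * (2^m * (real m * 2^m * \<delta>))"
    proof -
      have "2^m * \<bar>a^m - 1\<bar> \<le> 2^m * (real m * 2^m * \<delta>)" using q2 by (intro mult_left_mono) auto
      then have "\<bar>(a^m - 1) / a^m\<bar> \<le> 2^m * (real m * 2^m * \<delta>)" using q1 by linarith
      then show ?thesis unfolding abs_mult using yb by (intro mult_mono) auto
    qed
    have "\<bar>Omega deg d x0 $ i - Omega deg d y0 $ i\<bar> \<le> \<bar>Lp\<bar> * Cn * \<delta> + (3/(2*c))^k * (2^m * (real m * 2^m * \<delta>))"
    proof -
      have "\<bar>(x0$i - y0$i) + y0$i * ((a^m - 1) / a^m)\<bar> \<le> \<bar>x0$i - y0$i\<bar> + \<bar>y0$i * ((a^m - 1) / a^m)\<bar>"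
        by (rule abs_triangle_ineq)
      then show ?thesis unfolding Kx Ky split using e1 e2 by linarith
    qed
    also have "\<dots> = H * \<delta>" unfolding H_def by (simp add: algebra_simps)
    finally show ?thesis unfolding \<delta>_def .
  qed
  then show ?thesis by blast
qed

lemma CZ: "CZ_kernel gmul d (\<lambda>p. Omega deg d p $ i)"
proof -
  obtain B1 where B1: "B1 > 0" "\<And>p. p \<noteq> 0 \<Longrightarrow> \<bar>Omega deg d p $ i\<bar> \<le> B1 / d p 0"
    using K_bound by blast
  obtain H where H: "\<And>x0 y0. d x0 0 = 1 \<Longrightarrow> d x0 y0 \<le> 1/2 \<Longrightarrow>
      \<bar>Omega deg d x0 $ i - Omega deg d y0 $ i\<bar> \<le> H * d x0 y0" using holder1 by blast
  define B where "B = B1 + 2 * \<bar>H\<bar>"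
  have Bpos: "B > 0" unfolding B_def using B1 by simp
  have cont: "continuous_on (- {0}) (\<lambda>p. Omega deg d p $ i)"
  proof -
    have "continuous_on (- {0}) (\<lambda>p::real^'n. p$i / d p 0 ^ (deg i + 1))"
    proof (rule continuous_on_divide)
      show "continuous_on (- {0}) (\<lambda>p::real^'n. p$i)" by (intro continuous_intros)
      show "continuous_on (- {0}) (\<lambda>p::real^'n. d p 0 ^ (deg i + 1))"
        by (rule continuous_on_power, rule dcont_on) simp
      show "\<forall>p\<in>- {0}. d p 0 ^ (deg i + 1) \<noteq> 0"
      proof
        fix p :: "real^'n" assume "p \<in> - {0}"
        then have "0 < d p 0" using d_pos by simp
        then show "d p 0 ^ (deg i + 1) \<noteq> 0" by simp
      qed
    qed
    then show ?thesis by (simp add: Om)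
  qed
  have bnd: "\<bar>Omega deg d p $ i\<bar> \<le> B / d p 0" if "p \<noteq> 0" for p
  proof -
    have "B1 / d p 0 \<le> B / d p 0" using d_pos[OF that] unfolding B_def by (intro divide_right_mono) auto
    then show ?thesis using B1(2)[OF that] by linarith
  qed
  have hol: "\<bar>Omega deg d (gmul (- q) p1) $ i - Omega deg d (gmul (- q) p2) $ i\<bar>
        + \<bar>Omega deg d (gmul (- p1) q) $ i - Omega deg d (gmul (- p2) q) $ i\<bar>
      \<le> B * d p1 p2 powr 1 / d p1 q powr (1 + 1)"
    if h: "d p1 p2 \<le> d p1 q / 2" for p1 p2 q
  proof -
    define x where "x = gmul (- q) p1"
    define y where "y = gmul (- q) p2"
    have sw: "gmul (- p1) q = - x" "gmul (- p2) q = - y" unfolding x_def y_def by (rule inv_swap)+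
    have lhs: "\<bar>Omega deg d (gmul (- q) p1) $ i - Omega deg d (gmul (- q) p2) $ i\<bar>
        + \<bar>Omega deg d (gmul (- p1) q) $ i - Omega deg d (gmul (- p2) q) $ i\<bar>
       = 2 * \<bar>Omega deg d x $ i - Omega deg d y $ i\<bar>"
    proof -
      have "\<bar>- u - - v\<bar> = \<bar>u - v\<bar>" for u v :: real by linarith
      then show ?thesis unfolding sw K_neg x_def[symmetric] y_def[symmetric] by simp
    qed
    define \<rho> where "\<rho> = d p1 q"
    define \<delta> where "\<delta> = d p1 p2"
    have dx: "d x 0 = \<rho>"
    proof -
      have "d (gmul (- q) p1) (gmul (- q) q) = d p1 q" by (rule linv)
      then show ?thesis unfolding x_def \<rho>_def by (simp add: inv)
    qed
    have dxy: "d x y = \<delta>" unfolding x_def y_def \<delta>_def by (rule linv)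
    have \<delta>0: "0 \<le> \<delta>" unfolding \<delta>_def by (rule d_nn)
    show ?thesis
    proof (cases "\<rho> = 0")
      case True
      then have "\<delta> = 0" using h \<delta>0 unfolding \<rho>_def \<delta>_def by simp
      then have "x = y" using dxy d_zero by simp
      then show ?thesis unfolding lhs using Bpos \<delta>0 by (simp add: \<delta>_def[symmetric])
    next
      case False
      then have rp: "\<rho> > 0" using d_nn unfolding \<rho>_def by (simp add: less_le)
      define x0 where "x0 = dil deg (1/\<rho>) x"
      define y0 where "y0 = dil deg (1/\<rho>) y"
      have xx: "x = dil deg \<rho> x0" "y = dil deg \<rho> y0" unfolding x0_def y0_def dil_dil using rp
        by (simp_all add: dil_one)
      have dx0: "d x0 0 = 1" unfolding x0_def using d_dil0[of "1/\<rho>" x] rp dx by simp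
      have dxy0: "d x0 y0 = \<delta> / \<rho>" unfolding x0_def y0_def using dhom[of "1/\<rho>" x y] rp dxy by simp
      have "\<delta> / \<rho> \<le> 1/2" using h rp unfolding \<delta>_def \<rho>_def by (simp add: field_simps)
      then have "d x0 y0 \<le> 1/2" unfolding dxy0 .
      from H[OF dx0 this] have hh: "\<bar>Omega deg d x0 $ i - Omega deg d y0 $ i\<bar> \<le> H * (\<delta> / \<rho>)"
        unfolding dxy0 .
      have "\<bar>Omega deg d x $ i - Omega deg d y $ i\<bar> = \<bar>Omega deg d x0 $ i - Omega deg d y0 $ i\<bar> / \<rho>"
        unfolding xx K_dil[OF rp] using rp by (simp add: diff_divide_distrib[symmetric] abs_div)
      also have "\<dots> \<le> H * (\<delta> / \<rho>) / \<rho>" using hh rp by (intro divide_right_mono) auto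
      also have "\<dots> = H * \<delta> / \<rho>^2" by (simp add: power2_eq_square)
      also have "\<dots> \<le> \<bar>H\<bar> * \<delta> / \<rho>^2" using rp \<delta>0
        by (intro divide_right_mono mult_right_mono) auto
      finally have "2 * \<bar>Omega deg d x $ i - Omega deg d y $ i\<bar> \<le> 2 * \<bar>H\<bar> * \<delta> / \<rho>^2" by simp
      also have "\<dots> \<le> B * \<delta> / \<rho>^2" unfolding B_def using B1 \<delta>0 rp
        by (intro divide_right_mono mult_right_mono) auto
      also have "\<dots> = B * \<delta> powr 1 / \<rho> powr (1 + 1)"
      proof -
        have p1: "\<delta> powr 1 = \<delta>" using \<delta>0 by (cases "\<delta> = 0") simp_all
        have p2: "\<rho> powr (1 + 1) = \<rho>^2" using rp by (simp only: powr_add powr_one_gt_zero_iff power2_eq_square) simp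
        show ?thesis by (simp only: p1 p2)
      qed
      finally show ?thesis unfolding lhs \<rho>_def \<delta>_def .
    qed
  qed
  have "0 < (1::real) \<and> (1::real) \<le> 1 \<and> (\<forall>p. p \<noteq> 0 \<longrightarrow> \<bar>Omega deg d p $ i\<bar> \<le> B / d p 0) \<and>
        (\<forall>p1 p2 q. d p1 p2 \<le> d p1 q / 2 \<longrightarrow>
            \<bar>Omega deg d (gmul (- q) p1) $ i - Omega deg d (gmul (- q) p2) $ i\<bar>
            + \<bar>Omega deg d (gmul (- p1) q) $ i - Omega deg d (gmul (- p2) q) $ i\<bar>
              \<le> B * d p1 p2 powr 1 / d p1 q powr (1 + 1))"
    apply (intro conjI allI impI)
       apply simp
      apply simp
     apply (erule bnd)
    apply (erule hol)
    done
  then show ?thesis unfolding CZ_kernel_def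
    apply -
    apply (rule conjI[OF cont])
    apply (rule exI[of _ B])
    apply (rule conjI[OF Bpos])
    apply (rule exI[of _ 1])
    apply assumption
    done
qed

end


context
  fixes gmul :: "real^'n \<Rightarrow> real^'n \<Rightarrow> real^'n"
    and deg :: "'n \<Rightarrow> nat" and s :: nat
    and d :: "real^'n \<Rightarrow> real^'n \<Rightarrow> real"
  assumes cg: "carnot_group gmul deg s"
    and hm: "homogeneous_metric gmul deg d"
    and dc: "\<And>p. p \<noteq> 0 \<Longrightarrow> isCont (\<lambda>q. d q 0) p"
begin

lemma hl_props:
  assumes "L \<in> horizontal_lines deg"
  shows "\<And>x. x \<in> L \<Longrightarrow> - x \<in> L"
    and "L \<in> sets borel"
    and "\<And>x y. x \<in> L \<Longrightarrow> y \<in> L \<Longrightarrow> d (- x) (- y) = d x y"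
proof -
  obtain v where v: "v \<in> layer deg 1" "v \<noteq> 0" and L: "L = range (\<lambda>t::real. t *\<^sub>R v)"
    using assms unfolding horizontal_lines_def by blast
  show "- x \<in> L" if xL: "x \<in> L" for x
  proof -
    obtain a where "x = a *\<^sub>R v" using xL L by blast
    then have "- x = (- a) *\<^sub>R v" by simp
    then show ?thesis using L by blast
  qed
  have "L = span {v}" unfolding L span_singleton by simp
  then show "L \<in> sets borel" by simp
  show "d (- x) (- y) = d x y" if xyL: "x \<in> L" "y \<in> L" for x y
  proof -
    obtain a b where ab: "x = a *\<^sub>R v" "y = b *\<^sub>R v" using xyL L by blast
    have op: "gmul (a *\<^sub>R v) (b *\<^sub>R v) = (a + b) *\<^sub>R v" for a b by (rule oneparam[OF cg hm dc])
    have "d (gmul x (- x)) (gmul x (- y)) = d (- x) (- y)" by (rule linv[OF cg hm dc])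
    moreover have "gmul x (- x) = 0" by (rule inv[OF cg hm dc])
    moreover have "gmul x (- y) = (a - b) *\<^sub>R v" using op[of a "- b"] ab by simp
    ultimately have 1: "d (- x) (- y) = d 0 ((a - b) *\<^sub>R v)" by simp
    have "d (gmul (- y) x) (gmul (- y) y) = d x y" by (rule linv[OF cg hm dc])
    moreover have "gmul (- y) y = 0" by (rule inv[OF cg hm dc])
    moreover have "gmul (- y) x = (a - b) *\<^sub>R v" using op[of "- b" a] ab by simp
    ultimately have 2: "d x y = d ((a - b) *\<^sub>R v) 0" by simp
    show ?thesis using 1 2 d_comm[OF cg hm dc] by simp
  qed
qed

end


lemma h1_neg_le:
  fixes d :: "real^'n \<Rightarrow> real^'n \<Rightarrow> real" and L B :: "(real^'n) set"
  assumes Ls: "\<And>x. x \<in> L \<Longrightarrow> - x \<in> L"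
    and ds: "\<And>x y. x \<in> L \<Longrightarrow> y \<in> L \<Longrightarrow> d (- x) (- y) = d x y"
    and BL: "B \<subseteq> L"
  shows "hausdorff1 d (uminus ` B) \<le> hausdorff1 d B"
proof -
  have "hausdorff1_delta d \<delta> (uminus ` B) \<le> hausdorff1_delta d \<delta> B" for \<delta>
    unfolding hausdorff1_delta_def
  proof (rule INF_mono)
    fix C :: "nat \<Rightarrow> (real^'n) set" assume C: "C \<in> {C. B \<subseteq> (\<Union>i. C i) \<and> (\<forall>i. diam_d d (C i) \<le> ennreal \<delta>)}"
    define C' where "C' = (\<lambda>i::nat. uminus ` (C i \<inter> L))"
    have dm: "diam_d d (C' i) \<le> diam_d d (C i)" for i
    proof -
      have "ennreal (d x' y') \<le> diam_d d (C i)" if xym: "x' \<in> C' i" "y' \<in> C' i" for x' y'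
      proof -
        obtain x y where xy: "x \<in> C i" "x \<in> L" "y \<in> C i" "y \<in> L" "x' = - x" "y' = - y"
          using xym unfolding C'_def by blast
        have "ennreal (d x' y') = ennreal (d x y)" using ds xy by simp
        also have "\<dots> \<le> (SUP y\<in>C i. ennreal (d x y))" using xy by (intro SUP_upper) auto
        also have "\<dots> \<le> diam_d d (C i)" unfolding diam_d_def using xy
          by (intro SUP_upper[of x "C i" "\<lambda>x. SUP y\<in>C i. ennreal (d x y)"]) auto
        finally show ?thesis .
      qed
      then show ?thesis unfolding diam_d_def[of d "C' i"] by (intro SUP_least) auto
    qed
    have cov: "uminus ` B \<subseteq> (\<Union>i. C' i)"
    proof
      fix y assume "y \<in> uminus ` B"
      then obtain x where x: "x \<in> B" "y = - x" by blast
      then obtain i where "x \<in> C i" using C by blast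
      then show "y \<in> (\<Union>i. C' i)" unfolding C'_def using x BL by blast
    qed
    have dd: "\<forall>i. diam_d d (C' i) \<le> ennreal \<delta>" using C dm order.trans by blast
    have "(\<Sum>i. diam_d d (C' i)) \<le> (\<Sum>i. diam_d d (C i))"
      using dm by (intro suminf_le) auto
    then show "\<exists>C'\<in>{C. uminus ` B \<subseteq> (\<Union>i. C i) \<and> (\<forall>i. diam_d d (C i) \<le> ennreal \<delta>)}.
        (\<Sum>i. diam_d d (C' i)) \<le> (\<Sum>i. diam_d d (C i))"
      using cov dd by blast
  qed
  then show ?thesis unfolding hausdorff1_def by (intro SUP_mono) auto
qed

lemma h1_neg_eq:
  fixes d :: "real^'n \<Rightarrow> real^'n \<Rightarrow> real" and L B :: "(real^'n) set"
  assumes Ls: "\<And>x. x \<in> L \<Longrightarrow> - x \<in> L"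
    and ds: "\<And>x y. x \<in> L \<Longrightarrow> y \<in> L \<Longrightarrow> d (- x) (- y) = d x y"
    and BL: "B \<subseteq> L"
  shows "hausdorff1 d (uminus ` B) = hausdorff1 d B"
proof (rule antisym)
  show "hausdorff1 d (uminus ` B) \<le> hausdorff1 d B" by (rule h1_neg_le[of L d B, OF Ls ds BL])
  have "uminus ` B \<subseteq> L" using BL Ls by blast
  from h1_neg_le[of L d "uminus ` B", OF Ls ds this] show "hausdorff1 d B \<le> hausdorff1 d (uminus ` B)"
    by (simp add: image_image)
qed

lemma uminus_borel: "(\<lambda>x::real^'n. - x) \<in> borel_measurable borel"
  by (intro borel_measurable_continuous_onI continuous_intros)

lemma img_uminus: "uminus ` B = (\<lambda>x::real^'n. - x) -` B"
  by (auto simp: image_iff) (metis minus_minus)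

lemma H1_sets: "sets (H1_measure d) = sets (borel :: (real^'n) measure)"
  and H1_space: "space (H1_measure d) = (UNIV :: (real^'n) set)"
  unfolding H1_measure_def by (simp_all add: sets_measure_of_conv space_measure_of_conv sets.sigma_sets_eq[of borel, simplified])

lemma emeasure_neg:
  fixes d :: "real^'n \<Rightarrow> real^'n \<Rightarrow> real" and L B :: "(real^'n) set"
  assumes Ls: "\<And>x. x \<in> L \<Longrightarrow> - x \<in> L"
    and ds: "\<And>x y. x \<in> L \<Longrightarrow> y \<in> L \<Longrightarrow> d (- x) (- y) = d x y"
    and BL: "B \<subseteq> L" and Bb: "B \<in> sets borel"
  shows "emeasure (H1_measure d) (uminus ` B) = emeasure (H1_measure d) B"
proof -
  have sb: "sigma_sets UNIV (sets borel) = (sets borel :: (real^'n) set set)"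
    using sets.sigma_sets_eq[of borel] by simp
  have nb: "uminus ` B \<in> sets borel"
    unfolding img_uminus using measurable_sets[OF uminus_borel Bb] by simp
  show ?thesis unfolding H1_measure_def emeasure_measure_of_conv sb
    using nb Bb h1_neg_eq[of L d B, OF Ls ds BL] by simp
qed



lemma odd_int_zero:
  fixes d :: "real^'n \<Rightarrow> real^'n \<Rightarrow> real" and L :: "(real^'n) set" and f :: "real^'n \<Rightarrow> real"
  assumes Ls: "\<And>x. x \<in> L \<Longrightarrow> - x \<in> L"
    and ds: "\<And>x y. x \<in> L \<Longrightarrow> y \<in> L \<Longrightarrow> d (- x) (- y) = d x y"
    and Lb: "L \<in> sets borel"
    and fm: "f \<in> borel_measurable borel"
    and fo: "\<And>p. f (- p) = - f p"
  shows "set_lebesgue_integral (H1_measure d) L f = 0"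
proof -
  define M where "M = H1_measure d"
  define N where "N = restrict_space M L"
  have sM: "sets M = sets borel" unfolding M_def by (rule H1_sets)
  have spM: "space M = UNIV" unfolding M_def by (rule H1_space)
  have LM: "L \<inter> space M \<in> sets M" using Lb sM spM by simp
  have spN: "space N = L" unfolding N_def using spM by (simp add: space_restrict_space)
  have e1: "set_lebesgue_integral M L f = integral\<^sup>L N f"
    unfolding N_def set_lebesgue_integral_def using integral_restrict_space[OF LM, of f] by simp
  have um: "(\<lambda>x::real^'n. - x) \<in> measurable M M"
    using uminus_borel measurable_cong_sets[OF sM sM] by blast
  have umN: "(\<lambda>x::real^'n. - x) \<in> measurable N N"
    unfolding N_def by (rule measurable_restrict_space3[OF um]) (use Ls in auto)
  have fN: "f \<in> borel_measurable N"
  proof -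
    have "f \<in> borel_measurable M" using fm measurable_cong_sets[OF sM refl] by blast
    then show ?thesis unfolding N_def by (rule measurable_restrict_space1)
  qed
  have dN: "distr N N (\<lambda>x. - x) = N"
  proof (rule measure_eqI)
    show "sets (distr N N (\<lambda>x. - x)) = sets N" by simp
    fix A assume "A \<in> sets (distr N N (\<lambda>x. - x))"
    then have A: "A \<in> sets N" by simp
    then obtain A' where A': "A' \<in> sets M" "A = L \<inter> A'" unfolding N_def sets_restrict_space by blast
    have AL: "A \<subseteq> L" using A' by blast
    have Ab: "A \<in> sets borel" using A' sM Lb by auto
    have pre: "(\<lambda>x. - x) -` A \<inter> space N = uminus ` A"
      using AL Ls unfolding spN by (auto simp: image_iff) (metis minus_minus)+
    have nAL: "uminus ` A \<subseteq> L" using AL Ls by blast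
    have "emeasure (distr N N (\<lambda>x. - x)) A = emeasure N (uminus ` A)"
      using emeasure_distr[OF umN A] pre by simp
    also have "\<dots> = emeasure M (uminus ` A)" unfolding N_def by (rule emeasure_restrict_space[OF LM nAL])
    also have "\<dots> = emeasure M A" unfolding M_def by (rule emeasure_neg[of L d A, OF Ls ds AL Ab])
    also have "\<dots> = emeasure N A" unfolding N_def by (rule emeasure_restrict_space[OF LM AL, symmetric])
    finally show "emeasure (distr N N (\<lambda>x. - x)) A = emeasure N A" .
  qed
  have "integral\<^sup>L N f = integral\<^sup>L (distr N N (\<lambda>x. - x)) f" using dN by simp
  also have "\<dots> = integral\<^sup>L N (\<lambda>x. f (- x))" by (rule integral_distr[OF umN fN])
  also have "\<dots> = - integral\<^sup>L N f" by (simp add: fo)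
  finally have "integral\<^sup>L N f = 0" by simp
  then show ?thesis using e1 unfolding M_def by simp
qed



context
  fixes gmul :: "real^'n \<Rightarrow> real^'n \<Rightarrow> real^'n"
    and deg :: "'n \<Rightarrow> nat" and s :: nat
    and d :: "real^'n \<Rightarrow> real^'n \<Rightarrow> real"
  assumes cg: "carnot_group gmul deg s"
    and hm: "homogeneous_metric gmul deg d"
    and dc: "\<And>p. p \<noteq> 0 \<Longrightarrow> isCont (\<lambda>q. d q 0) p"
begin

lemma annular: "annular_bounded deg d (\<lambda>p. Omega deg d p $ i)"
  unfolding annular_bounded_def
proof (intro allI impI)
  fix \<psi> :: "real^'n \<Rightarrow> real"
  assume a: "smooth_fun \<psi> \<and> radial d \<psi> \<and>
          (\<forall>p. indicator (dball0 d (1/2)) p \<le> \<psi> p \<and> \<psi> p \<le> indicator (dball0 d 2) p)"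
  have dn: "d (- q) 0 = d q 0" for q by (rule d_neg0[OF cg hm]) (fact dc)
  have kn: "Omega deg d (- q) $ i = - Omega deg d q $ i" for q by (rule K_neg[OF cg hm]) (fact dc)
  have czk: "CZ_kernel gmul d (\<lambda>p. Omega deg d p $ i)" by (rule CZ[OF cg hm]) (fact dc)
  have hl1: "\<And>x. x \<in> L \<Longrightarrow> - x \<in> L" if "L \<in> horizontal_lines deg" for L
    by (rule hl_props(1)[OF cg hm _ that]) (simp_all add: dc)
  have hl2: "L \<in> sets borel" if "L \<in> horizontal_lines deg" for L
    by (rule hl_props(2)[OF cg hm _ that]) (simp_all add: dc)
  have hl3: "\<And>x y. x \<in> L \<Longrightarrow> y \<in> L \<Longrightarrow> d (- x) (- y) = d x y" if "L \<in> horizontal_lines deg" for L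
    by (rule hl_props(3)[OF cg hm _ that]) (simp_all add: dc)
  obtain F where F: "\<And>p. \<psi> p = F (d p 0)" using a unfolding radial_def by blast
  have psc: "continuous_on UNIV \<psi>" using a unfolding smooth_fun_def by (metis Ck.simps(1))
  have Kc: "continuous_on (- {0}) (\<lambda>p. Omega deg d p $ i)"
    using czk unfolding CZ_kernel_def by blast
  have "\<bar>LINT p:L|H1_measure d. (\<psi> (dil deg (1/R) p) - \<psi> (dil deg (1/r) p)) * Omega deg d p $ i\<bar> \<le> 1"
    if L: "L \<in> horizontal_lines deg" for r R L
  proof -
    define f where "f = (\<lambda>p. (\<psi> (dil deg (1/R) p) - \<psi> (dil deg (1/r) p)) * Omega deg d p $ i)"
    have pd: "\<psi> (dil deg a (- p)) = \<psi> (dil deg a p)" for a p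
    proof -
      have "dil deg a (- p) = - dil deg a p" by (simp add: dil_def vec_eq_iff)
      then show ?thesis using dn[of "dil deg a p"] F by simp
    qed
    have fo: "f (- p) = - f p" for p
      unfolding f_def pd kn by simp
    have dilc: "continuous_on S (dil deg a)" for S a
      unfolding dil_def by (intro continuous_intros)
    have psd: "continuous_on S (\<lambda>p. \<psi> (dil deg a p))" for S a
      by (rule continuous_on_compose2[OF psc dilc]) auto
    have "continuous_on (- {0}) f" unfolding f_def
      by (intro continuous_on_mult continuous_on_diff psd Kc)
    then have fm: "f \<in> borel_measurable borel"
      by (rule borel_measurable_continuous_countable_exceptions[rotated]) simp
    have "set_lebesgue_integral (H1_measure d) L f = 0"
      by (rule odd_int_zero[of L d f, OF hl1[OF L] hl3[OF L] hl2[OF L] fm fo])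
    then show ?thesis unfolding f_def by simp
  qed
  then show "\<exists>A\<ge>1. \<forall>r R. 0 < r \<and> r < R \<longrightarrow>
           (\<forall>L\<in>horizontal_lines deg.
              \<bar>LINT p:L|H1_measure d. (\<psi> (dil deg (1/R) p) - \<psi> (dil deg (1/r) p)) * Omega deg d p $ i\<bar> \<le> A)"
    by (intro exI[of _ 1]) auto
qed

end

theorem mainTheorem10:
  fixes gmul :: "real^'n \<Rightarrow> real^'n \<Rightarrow> real^'n"
    and deg :: "'n \<Rightarrow> nat" and s :: nat
    and d :: "real^'n \<Rightarrow> real^'n \<Rightarrow> real"
  assumes "carnot_group gmul deg s"
    and "homogeneous_metric gmul deg d"
    and "\<forall>v\<in>layer deg 1. d v 0 = norm v"
    and "\<exists>D :: real^'n \<Rightarrow> ((real^'n) \<Rightarrow>\<^sub>L real).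
           (\<forall>p. p \<noteq> 0 \<longrightarrow> ((\<lambda>q. d q 0) has_derivative blinfun_apply (D p)) (at p)) \<and>
           continuous_on (- {0}) D"
  shows "\<forall>i. CZ_kernel gmul d (\<lambda>p. Omega deg d p $ i) \<and>
             annular_bounded deg d (\<lambda>p. Omega deg d p $ i)"
proof -
  obtain D :: "real^'n \<Rightarrow> ((real^'n) \<Rightarrow>\<^sub>L real)" where
    D: "\<forall>p. p \<noteq> 0 \<longrightarrow> ((\<lambda>q. d q 0) has_derivative blinfun_apply (D p)) (at p)"
    using assms(4) by blast
  have dc: "isCont (\<lambda>q. d q 0) p" if "p \<noteq> 0" for p
    using D that has_derivative_continuous by blast
  have "CZ_kernel gmul d (\<lambda>p. Omega deg d p $ i)" for i by (rule CZ[OF assms(1,2)]) (fact dc)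
  moreover have "annular_bounded deg d (\<lambda>p. Omega deg d p $ i)" for i by (rule annular[OF assms(1,2)]) (fact dc)
  ultimately show ?thesis by blast
qed


end
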